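(* Let $(X,\|\cdot\|)$ be a Banach space and let $\{v_n\}_{n\in\mathbb{N}}\subset X$ be a sequence such that $\|v_{n+m}\|\le\|v_n+v_m\|$ for all $n,m\in\mathbb{N}$. Assume that either (i) there exists $i\in\mathbb{N}$ with $v_i=0$, or (ii) $v_n\neq0$ for all $n\in\mathbb{N}$ and the set $\left\{\frac{v_n}{\|v_n\|}\right\}_{n\in\mathbb{N}}$ is a uniformly convex subset of $X$. Then the limit $\lim_{n\to\infty}\frac{v_n}{n}$ exists in $X$.
   Context: $\mathbb{N}=\{1,2,3,\dots\}$. A subset $S$ of a normed space $X$ is called uniformly convex if for every $\varepsilon>0$ there exists $\delta\in(0,1)$ such that for all $u,v\in S$ with $\|u\|=\|v\|=1$ and $\|u-v\|\ge\varepsilon$ we have $\|u+v\|\le 2-\delta$. *)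

theory Defs
  imports "HOL-Analysis.Analysis"
begin

definition uniformly_convex_set :: "'a::real_normed_vector set \<Rightarrow> bool" where
  "uniformly_convex_set S \<longleftrightarrow>
     (\<forall>\<epsilon>>0. \<exists>\<delta>. 0 < \<delta> \<and> \<delta> < 1 \<and>
        (\<forall>u\<in>S. \<forall>v\<in>S. norm u = 1 \<longrightarrow> norm v = 1 \<longrightarrow> norm (u - v) \<ge> \<epsilon> \<longrightarrow>
            norm (u + v) \<le> 2 - \<delta>))"

end

theory Submission
  imports Defs
begin

lemma tele_aux:
  fixes a :: "nat \<Rightarrow> real"
  assumes "\<forall>j<k. c \<le> a n + a (T + j*n) - a (T + Suc j * n)"
  shows "real k * c \<le> real k * a n + a T - a (T + k*n)"
  using assms
proof (induction k)
  case 0 then show ?case by simp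
next
  case (Suc k)
  have "c \<le> a n + a (T + k*n) - a (T + Suc k * n)" using Suc.prems by auto
  moreover have "real k * c \<le> real k * a n + a T - a (T + k*n)" using Suc by auto
  ultimately show ?case by (simp add: algebra_simps)
qed

lemma fekete_aux:
  fixes a :: "nat \<Rightarrow> real"
  assumes nn: "\<And>n. a n \<ge> 0" and sub: "\<And>n m. n\<ge>1 \<Longrightarrow> m\<ge>1 \<Longrightarrow> a (n+m) \<le> a n + a m"
  shows "\<exists>A. (\<forall>n\<ge>1. real n * A \<le> a n) \<and> ((\<lambda>n. a n / real n) \<longlonglongrightarrow> A)"
proof -
  define S where "S = (\<lambda>n. a n / real n) ` {1..}"
  define A where "A = Inf S"
  have bdd: "bdd_below S" unfolding S_def using nn by (intro bdd_belowI[of _ 0]) auto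
  have ne: "S \<noteq> {}" unfolding S_def by auto
  have low: "A \<le> a n / real n" if "n \<ge> 1" for n
    unfolding A_def by (rule cInf_lower) (use that bdd in \<open>auto simp: S_def\<close>)
  have A1: "real n * A \<le> a n" if "n\<ge>1" for n using low[OF that] that by (simp add: field_simps)
  have dec: "a (q*p + r) \<le> real q * a p + a r" if "p \<ge> 1" "r \<ge> 1" for q p r
    using that
  proof (induction q)
    case 0 then show ?case by simp
  next
    case (Suc q)
    have "a (Suc q * p + r) = a (p + (q*p + r))" by (simp add: algebra_simps)
    also have "\<dots> \<le> a p + a (q*p+r)" using Suc.prems by (intro sub) auto
    also have "\<dots> \<le> a p + (real q * a p + a r)" using Suc by auto
    finally show ?case by (simp add: algebra_simps)
  qed
  have "(\<lambda>n. a n / real n) \<longlonglongrightarrow> A"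
  proof (rule LIMSEQ_I)
    fix e :: real assume e: "e > 0"
    have "Inf S < A + e/2" using e A_def by simp
    then obtain x where "x \<in> S" "x < A + e/2" using cInf_less_iff[OF ne bdd] by blast
    then obtain p where p: "p \<ge> 1" "a p / real p < A + e/2" unfolding S_def by auto
    define B where "B = (\<Sum>r\<in>{1..p}. a r)"
    have aB: "a r \<le> B" if "r \<in> {1..p}" for r
      unfolding B_def by (rule member_le_sum) (use nn that in auto)
    have B0: "B \<ge> 0" unfolding B_def using nn by (simp add: sum_nonneg)
    obtain N :: nat where N: "real N > 2*B/e" using reals_Archimedean2 by blast
    show "\<exists>no. \<forall>n\<ge>no. norm (a n / real n - A) < e"
    proof (intro exI[of _ "N+1"] allI impI)
      fix n assume n: "n \<ge> N+1"
      define q where "q = (n-1) div p"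
      define r where "r = (n-1) mod p + 1"
      have nqr: "n = q*p + r" unfolding q_def r_def using n
        by (metis Suc_eq_plus1 add.assoc add.commute le_add_diff_inverse2 le_add2 le_trans mod_div_mult_eq)
      have r: "r \<in> {1..p}" unfolding r_def using p(1)
        by (simp add: Suc_leI)
      have "a n \<le> real q * a p + a r" using nqr dec[of p r q] p(1) r by auto
      also have "\<dots> \<le> real q * a p + B" using aB[OF r] by simp
      finally have an: "a n \<le> real q * a p + B" .
      have qp: "real q * a p \<le> real n * (a p / real p)"
      proof -
        have "real q * a p = real (q*p) * (a p / real p)" using p(1) by simp
        also have "\<dots> \<le> real n * (a p / real p)"
          using nqr nn[of p] by (intro mult_right_mono) auto
        finally show ?thesis .
      qed
      have npos: "real n > 0" using n by simp
      have "a n / real n \<le> a p / real p + B / real n"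
        using an qp npos by (simp add: field_simps)
      moreover have "B / real n < e/2"
      proof -
        have "real n > 2*B/e" using N n by simp
        then have "2*B < real n * e" using e by (simp add: field_simps)
        then show ?thesis using npos by (simp add: field_simps)
      qed
      moreover have "A \<le> a n / real n" using low n by simp
      ultimately have "a n / real n - A < e" "A \<le> a n / real n" using p(2) by linarith+
      then show "norm (a n / real n - A) < e" by simp
    qed
  qed
  then show ?thesis using A1 by blast
qed

lemma uc_aux:
  fixes x y :: "'a::real_normed_vector"
  assumes "norm x = 1" "norm y = 1" "\<alpha> \<ge> 0" "\<beta> \<ge> 0" "norm (x+y) \<le> 2 - \<delta>"
  shows "norm (\<alpha> *\<^sub>R x + \<beta> *\<^sub>R y) \<le> \<alpha> + \<beta> - \<delta> * min \<alpha> \<beta>"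
proof (cases "\<alpha> \<le> \<beta>")
  case True
  have "\<alpha> *\<^sub>R x + \<beta> *\<^sub>R y = \<alpha> *\<^sub>R (x + y) + (\<beta> - \<alpha>) *\<^sub>R y" by (simp add: algebra_simps)
  also have "norm \<dots> \<le> \<alpha> * norm (x+y) + (\<beta> - \<alpha>) * norm y"
    using True assms by (metis (no_types, lifting) abs_of_nonneg diff_ge_0_iff_ge norm_scaleR norm_triangle_ineq)
  also have "\<dots> \<le> \<alpha> * (2 - \<delta>) + (\<beta> - \<alpha>)" using assms by (simp add: mult_left_mono)
  finally show ?thesis using True by (simp add: algebra_simps)
next
  case False
  have "\<alpha> *\<^sub>R x + \<beta> *\<^sub>R y = \<beta> *\<^sub>R (x + y) + (\<alpha> - \<beta>) *\<^sub>R x" by (simp add: algebra_simps)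
  also have "norm \<dots> \<le> \<beta> * norm (x+y) + (\<alpha> - \<beta>) * norm x"
    using False assms by (metis (no_types, lifting) abs_of_nonneg diff_ge_0_iff_ge nle_le norm_scaleR norm_triangle_ineq)
  also have "\<dots> \<le> \<beta> * (2 - \<delta>) + (\<alpha> - \<beta>)" using assms by (simp add: mult_left_mono)
  finally show ?thesis using False by (simp add: algebra_simps)
qed

theorem mainTheorem7:
  fixes v :: "nat \<Rightarrow> 'a::banach"
  assumes subadd: "\<And>n m. n \<ge> 1 \<Longrightarrow> m \<ge> 1 \<Longrightarrow> norm (v (n + m)) \<le> norm (v n + v m)"
    and cases: "(\<exists>i\<ge>1. v i = 0) \<or>
               ((\<forall>n\<ge>1. v n \<noteq> 0) \<and>
                uniformly_convex_set ((\<lambda>n. v n /\<^sub>R norm (v n)) ` {1..}))"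
  shows "\<exists>L. ((\<lambda>n. v n /\<^sub>R real n) \<longlongrightarrow> L) sequentially"
proof -
  define a where "a n = norm (v n)" for n
  have nn: "a n \<ge> 0" for n unfolding a_def by simp
  have sub: "a (n+m) \<le> a n + a m" if "n\<ge>1" "m\<ge>1" for n m
    unfolding a_def using subadd[OF that] norm_triangle_ineq order_trans by blast
  have subv: "a (n+m) \<le> norm (v n + v m)" if "n\<ge>1" "m\<ge>1" for n m
    unfolding a_def using subadd[OF that] .
  obtain A where A1: "\<forall>n\<ge>1. real n * A \<le> a n" and Alim: "(\<lambda>n. a n / real n) \<longlonglongrightarrow> A"
    using fekete_aux[of a, OF nn sub] by blast
  have A0: "A \<ge> 0"
    by (rule LIMSEQ_le_const[OF Alim]) (use nn in \<open>auto intro: divide_nonneg_nonneg\<close>)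
  have zero_case: "\<exists>L. ((\<lambda>n. v n /\<^sub>R real n) \<longlongrightarrow> L) sequentially" if "A = 0"
  proof -
    have "((\<lambda>n. norm (v n /\<^sub>R real n)) \<longlongrightarrow> 0) sequentially"
      using Alim that by (simp add: a_def divide_inverse mult.commute)
    then show ?thesis using tendsto_norm_zero_iff by blast
  qed
  show ?thesis
  proof (cases "\<exists>i\<ge>1. v i = 0")
    case True
    then obtain i where i: "i \<ge> 1" "v i = 0" by blast
    have "real i * A \<le> 0" using A1 i by (auto simp: a_def)
    then have "A = 0" using A0 i by (simp add: mult_le_0_iff)
    then show ?thesis using zero_case by blast
  next
    case False
    with cases have vnz: "\<forall>n\<ge>1. v n \<noteq> 0"
      and UC: "uniformly_convex_set ((\<lambda>n. v n /\<^sub>R norm (v n)) ` {1..})" by auto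
    show ?thesis
    proof (cases "A = 0")
      case True then show ?thesis using zero_case by blast
    next
      case False
      then have Apos: "A > 0" using A0 by simp
      define u where "u n = v n /\<^sub>R a n" for n
      have apos: "a n > 0" if "n \<ge> 1" for n using vnz that by (simp add: a_def)
      have unit: "norm (u n) = 1" if "n \<ge> 1" for n
        using apos[OF that] by (simp add: u_def a_def)
      have vu: "v n = a n *\<^sub>R u n" if "n \<ge> 1" for n
        using apos[OF that] by (simp add: u_def)
      have close: "norm (u n - u m) < \<epsilon>"
        if nm: "n\<ge>1" "m\<ge>1" and lt: "a n + a m - a (n+m) < \<delta> * min (a n) (a m)"
          and uc: "\<forall>x\<in>(\<lambda>n. v n /\<^sub>R norm (v n)) ` {1..}. \<forall>y\<in>(\<lambda>n. v n /\<^sub>R norm (v n)) ` {1..}.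
                 norm x = 1 \<longrightarrow> norm y = 1 \<longrightarrow> norm (x - y) \<ge> \<epsilon> \<longrightarrow> norm (x + y) \<le> 2 - \<delta>"
        for n m \<epsilon> \<delta>
      proof (rule ccontr)
        assume "\<not> norm (u n - u m) < \<epsilon>"
        moreover have mem: "u n \<in> (\<lambda>n. v n /\<^sub>R norm (v n)) ` {1..}" "u m \<in> (\<lambda>n. v n /\<^sub>R norm (v n)) ` {1..}"
          using nm by (auto simp: u_def a_def)
        ultimately have "norm (u n + u m) \<le> 2 - \<delta>" using uc[rule_format, OF mem unit[OF nm(1)] unit[OF nm(2)]] by simp
        then have "norm (a n *\<^sub>R u n + a m *\<^sub>R u m) \<le> a n + a m - \<delta> * min (a n) (a m)"
          by (intro uc_aux) (use unit nm nn in auto)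
        then have "a (n+m) \<le> a n + a m - \<delta> * min (a n) (a m)"
          using subv[OF nm] vu nm by auto
        then show False using lt by simp
      qed
      have "Cauchy u"
      proof (rule CauchyI)
        fix e :: real assume e: "e > 0"
        obtain \<delta> where d: "0 < \<delta>" "\<delta> < 1"
          and uc: "\<forall>x\<in>(\<lambda>n. v n /\<^sub>R norm (v n)) ` {1..}. \<forall>y\<in>(\<lambda>n. v n /\<^sub>R norm (v n)) ` {1..}.
                 norm x = 1 \<longrightarrow> norm y = 1 \<longrightarrow> norm (x - y) \<ge> e/3 \<longrightarrow> norm (x + y) \<le> 2 - \<delta>"
          using UC[unfolded uniformly_convex_set_def, rule_format, of "e/3"] e by auto
        define \<eta> where "\<eta> = \<delta> * A / 4"
        have eta: "\<eta> > 0" using d Apos by (simp add: \<eta>_def)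
        obtain N0 where N0: "\<forall>n\<ge>N0. norm (a n / real n - A) < \<eta>"
          using LIMSEQ_D[OF Alim eta] by blast
        define N where "N = max N0 1"
        have up: "a j < real j * (A + \<eta>)" if "j \<ge> N" for j
        proof -
          have j: "j \<ge> N0" "j \<ge> 1" using that by (auto simp: N_def)
          then have "a j / real j < A + \<eta>" using N0 by auto
          then show ?thesis using j by (simp add: field_simps)
        qed
        have lowA: "real j * A \<le> a j" if "j \<ge> 1" for j using A1 that by auto
        show "\<exists>M. \<forall>m\<ge>M. \<forall>n\<ge>M. norm (u m - u n) < e"
        proof (intro exI[of _ N] allI impI)
          fix n n' assume n: "n \<ge> N" and n': "n' \<ge> N"
          have N1: "N \<ge> 1" by (simp add: N_def)
          define T where "T = N * n * n'"
          have nn1: "n*n' \<ge> 1" using n n' N1 by simp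
          have "N*1 \<le> N*(n*n')" by (rule mult_le_mono2) (use nn1 in simp)
          then have T1: "T \<ge> N" unfolding T_def by (simp add: mult.assoc)
          have ex: "\<exists>m. T \<le> m \<and> m < 2*T \<and> norm (u p - u m) < e/3"
            if p: "p \<ge> N" and Tk: "T = k * p" and k1: "k \<ge> 1" for p k
          proof (rule ccontr)
            assume not: "\<not> ?thesis"
            have p1: "p \<ge> 1" using p N1 by simp
            have "\<forall>j<k. \<delta> * (real p * A) \<le> a p + a (T + j*p) - a (T + Suc j * p)"
            proof (intro allI impI)
              fix j assume j: "j < k"
              define m where "m = T + j*p"
              have "j * p < k * p" using j p1 by simp
              then have mT: "T \<le> m" "m < 2*T" using Tk by (auto simp: m_def)
              then have "\<not> norm (u p - u m) < e/3" using not by blast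
              moreover have m1: "m \<ge> 1" using mT T1 N1 by simp
              ultimately have "\<not> (a p + a m - a (p+m) < \<delta> * min (a p) (a m))"
                using close[OF p1 m1 _ uc] by blast
              moreover have "real p * A \<le> min (a p) (a m)"
              proof -
                have "p \<le> k*p" using k1 by simp
                then have "p \<le> m" using mT Tk by linarith
                then have "real p * A \<le> real m * A" using Apos by (simp add: mult_right_mono)
                then show ?thesis using lowA[OF p1] lowA[OF m1] by simp
              qed
              moreover have "a (p + m) = a (T + Suc j * p)" by (simp add: m_def algebra_simps)
              moreover have "a (T + j*p) = a m" by (simp add: m_def)
              ultimately have "a p + a (T + j*p) - a (T + Suc j * p) \<ge> \<delta> * min (a p) (a m)"
                 "real p * A \<le> min (a p) (a m)" by linarith+
              moreover have "\<delta> * (real p * A) \<le> \<delta> * min (a p) (a m)"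
                using d calculation(2) by (intro mult_left_mono) auto
              ultimately show "\<delta> * (real p * A) \<le> a p + a (T + j*p) - a (T + Suc j * p)"
                by linarith
            qed
            from tele_aux[OF this]
            have "real k * (\<delta> * (real p * A)) \<le> real k * a p + a T - a (T + k*p)" .
            moreover have "real k * a p \<le> real T * (A + \<eta>)"
              using up[OF p] k1 Tk by (simp add: mult.assoc)
            moreover have "a T < real T * (A + \<eta>)" using up[OF T1] .
            moreover have e2: "T + k*p = 2*T" using Tk by simp
            have "a (T + k*p) = a (2*T)" using e2 by (simp only:)
            moreover have "2 * (real T * A) \<le> a (2*T)" using lowA[of "2*T"] T1 N1 by simp
            moreover have "real k * (\<delta> * (real p * A)) = real T * \<delta> * A" using Tk by simp
            moreover have "real T * (A + \<eta>) = real T * A + real T * \<eta>" by (simp add: distrib_left)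
            moreover have "real T * \<eta> = real T * \<delta> * A / 4" by (simp add: \<eta>_def)
            moreover have "real T * \<delta> * A > 0" using T1 N1 d Apos by simp
            ultimately show False by linarith
          qed
          have k1: "N*n' \<ge> 1" "N*n \<ge> 1" using N1 n n' by simp_all
          have Te: "T = (N*n')*n" "T = (N*n)*n'" by (simp_all add: T_def mult_ac)
          obtain m where m: "T \<le> m" "m < 2*T" "norm (u n - u m) < e/3"
            using ex[OF n Te(1) k1(1)] by blast
          obtain m' where m': "T \<le> m'" "m' < 2*T" "norm (u n' - u m') < e/3"
            using ex[OF n' Te(2) k1(2)] by blast
          have mN: "m \<ge> N" "m' \<ge> N" using m m' T1 by auto
          have m1: "m \<ge> 1" "m' \<ge> 1" using mN N1 by auto
          have "norm (u m - u m') < e/3"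
          proof (rule close[OF m1 _ uc])
            have "a m + a m' - a (m+m') < real m * (A + \<eta>) + real m' * (A + \<eta>) - real (m+m') * A"
              using up[OF mN(1)] up[OF mN(2)] lowA[of "m+m'"] m1 by simp
            also have "\<dots> = real (m+m') * \<eta>" by (simp add: algebra_simps)
            also have "\<dots> \<le> real (4*T) * \<eta>" using m m' eta by (intro mult_right_mono) auto
            also have "\<dots> = \<delta> * (real T * A)" by (simp add: \<eta>_def)
            also have "\<dots> \<le> \<delta> * min (a m) (a m')"
            proof -
              have "real T * A \<le> real m * A" "real T * A \<le> real m' * A"
                using m m' Apos by (auto intro: mult_right_mono)
              then have "real T * A \<le> min (a m) (a m')" using lowA[OF m1(1)] lowA[OF m1(2)] by simp
              then show ?thesis using d by (simp add: mult_left_mono)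
            qed
            finally show "a m + a m' - a (m+m') < \<delta> * min (a m) (a m')" .
          qed
          have "norm (u n - u n') \<le> norm ((u n - u m) + (u m - u m')) + norm (u m' - u n')"
            using norm_triangle_ineq[of "(u n - u m) + (u m - u m')" "u m' - u n'"] by simp
          also have "\<dots> \<le> norm (u n - u m) + norm (u m - u m') + norm (u m' - u n')"
            using norm_triangle_ineq[of "u n - u m" "u m - u m'"] by simp
          also have "\<dots> < e" using m(3) m'(3) `norm (u m - u m') < e/3`
            by (simp add: norm_minus_commute)
          finally show "norm (u n - u n') < e" .
        qed
      qed
      then obtain U where U: "u \<longlonglongrightarrow> U" using Cauchy_convergent_iff convergent_def by blast
      have "(\<lambda>n. (a n / real n) *\<^sub>R u n) \<longlonglongrightarrow> A *\<^sub>R U" using tendsto_scaleR[OF Alim U] .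
      moreover have "(\<lambda>n. (a n / real n) *\<^sub>R u n) = (\<lambda>n. v n /\<^sub>R real n)"
      proof
        fix n show "(a n / real n) *\<^sub>R u n = v n /\<^sub>R real n"
          by (cases "n = 0") (auto simp: u_def a_def inverse_eq_divide)
      qed
      ultimately show ?thesis by auto
    qed
  qed
qed

end
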